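(* Let $y$ be a real random variable with density $f$, let $y_1,\dots,y_n$ be i.i.d. copies with $n=Hc$ and order statistics $y_{(1)}\le\dots\le y_{(n)}$. Define the random intervals $S_1=(-\infty,y_{(c)}]$, $S_h=(y_{((h-1)c)},y_{(hc)}]$ for $2\le h\le H-1$, $S_H=(y_{((H-1)c)},\infty)$, and $\delta_h=\int_{S_h}f(u)\,du$. Let $E(\epsilon)=\{\omega: |\delta_h-\frac1H|>\epsilon\text{ for some }h\}$. There exists a positive constant $C$ such that for any $\epsilon>\frac4{Hc-1}$, \[P(E(\epsilon))\le CH^2\sqrt{Hc+1}\exp\Big(-(Hc+1)\frac{\epsilon^2}{32}\Big)\] for sufficiently large $H$ and $c$. *)

theory Defs
  imports "HOL-Probability.Probability"
begin

definition order_stat :: "(nat \<Rightarrow> 'a \<Rightarrow> real) \<Rightarrow> nat \<Rightarrow> nat \<Rightarrow> 'a \<Rightarrow> real" where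
  "order_stat Y n k w = sort (map (\<lambda>i. Y i w) [1..<n+1]) ! (k - 1)"

definition slice :: "(nat \<Rightarrow> 'a \<Rightarrow> real) \<Rightarrow> nat \<Rightarrow> nat \<Rightarrow> nat \<Rightarrow> 'a \<Rightarrow> real set" where
  "slice Y H c h w =
     (if h = 1 then {..order_stat Y (H*c) c w}
      else if h = H then {order_stat Y (H*c) ((H-1)*c) w<..}
      else {order_stat Y (H*c) ((h-1)*c) w<..order_stat Y (H*c) (h*c) w})"

definition slice_mass :: "(real \<Rightarrow> real) \<Rightarrow> (nat \<Rightarrow> 'a \<Rightarrow> real) \<Rightarrow> nat \<Rightarrow> nat \<Rightarrow> nat \<Rightarrow> 'a \<Rightarrow> real" where
  "slice_mass f Y H c h w = (LINT u:slice Y H c h w|lborel. f u)"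

definition bad_event :: "'a measure \<Rightarrow> (real \<Rightarrow> real) \<Rightarrow> (nat \<Rightarrow> 'a \<Rightarrow> real) \<Rightarrow> nat \<Rightarrow> nat \<Rightarrow> real \<Rightarrow> 'a set" where
  "bad_event M f Y H c \<epsilon> =
     {w \<in> space M. \<exists>h\<in>{1..H}. \<bar>slice_mass f Y H c h w - 1 / real H\<bar> > \<epsilon>}"

end

theory Submission
  imports Defs
begin


lemma sum_sort_ind:
  fixes g :: "real \<Rightarrow> real"
  shows "(\<Sum>i\<in>{1..n}. g (Y i w)) = (\<Sum>j<n. g (sort (map (\<lambda>i. Y i w) [1..<n+1]) ! j))"
proof -
  define xs where "xs = map (\<lambda>i. Y i w) [1..<n+1]"
  have len: "length (sort xs) = n" "length xs = n" by (simp_all add: xs_def)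
  have "sum_list (map g (sort xs)) = (\<Sum>j<length (sort xs). g (sort xs ! j))"
    by (simp add: sum_list_sum_nth atLeast0LessThan)
  then have "(\<Sum>j<n. g (sort xs ! j)) = sum_list (map g (sort xs))" by (simp only: len)
  also have "\<dots> = sum_mset (image_mset g (mset (sort xs)))"
    by (metis mset_map sum_mset_sum_list)
  also have "\<dots> = sum_list (map g xs)"
    by (metis mset_map mset_sort sum_mset_sum_list)
  also have "\<dots> = (\<Sum>i\<in>{1..n}. g (Y i w))"
  proof -
    have st: "set [1..<n+1] = {1..n}" by auto
    have "sum_list (map g xs) = sum_list (map (\<lambda>i. g (Y i w)) [1..<n+1])"
      by (simp only: xs_def map_map o_def)
    also have "\<dots> = (\<Sum>i\<in>set [1..<n+1]. g (Y i w))"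
      by (rule sum_list_distinct_conv_sum_set) simp
    finally show ?thesis by (simp only: st)
  qed
  finally show ?thesis by (simp add: xs_def)
qed

lemma count_upper:
  fixes L :: "real list"
  assumes "sorted L" "1 \<le> m" "m \<le> length L" "L!(m-1) > q"
  shows "(\<Sum>j<length L. if L!j \<le> q then 1 else 0::real) \<le> real m - 1"
proof -
  have "(\<Sum>j<length L. if L!j \<le> q then 1 else 0::real) \<le> (\<Sum>j<length L. if j < m - 1 then 1 else 0)"
  proof (rule sum_mono)
    fix j assume j: "j \<in> {..<length L}"
    show "(if L!j \<le> q then 1 else 0::real) \<le> (if j < m - 1 then 1 else 0)"
    proof (cases "j < m - 1")
      case False
      then have "L!(m-1) \<le> L!j" using assms j by (intro sorted_nth_mono) auto
      then show ?thesis using assms False by auto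
    qed auto
  qed
  also have "\<dots> = real (card {j. j < length L \<and> j < m - 1})"
    by (simp add: sum.If_cases Int_def conj_commute)
  also have "{j. j < length L \<and> j < m - 1} = {..<m-1}" using assms by auto
  finally show ?thesis using assms by simp
qed

lemma count_lower:
  fixes L :: "real list"
  assumes "sorted L" "1 \<le> m" "m \<le> length L" "L!(m-1) \<le> q"
  shows "(\<Sum>j<length L. if L!j \<le> q then 1 else 0::real) \<ge> real m"
proof -
  have "(\<Sum>j<length L. if L!j \<le> q then 1 else 0::real) \<ge> (\<Sum>j<length L. if j < m then 1 else 0)"
  proof (rule sum_mono)
    fix j assume j: "j \<in> {..<length L}"
    show "(if L!j \<le> q then 1 else 0::real) \<ge> (if j < m then 1 else 0)"
    proof (cases "j < m")
      case True
      then have "L!j \<le> L!(m-1)" using assms j by (intro sorted_nth_mono) auto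
      then show ?thesis using assms True by auto
    qed auto
  qed
  moreover have "(\<Sum>j<length L. if j < m then 1 else 0::real) = real (card {j. j < length L \<and> j < m})"
    by (simp add: sum.If_cases Int_def conj_commute)
  moreover have "{j. j < length L \<and> j < m} = {..<m}" using assms by auto
  ultimately show ?thesis by simp
qed




context
  fixes f :: "real \<Rightarrow> real" and M :: "'a measure" and Y :: "nat \<Rightarrow> 'a \<Rightarrow> real" and n :: nat
  assumes f_nonneg: "\<And>x. 0 \<le> f x"
    and f_meas: "f \<in> borel_measurable borel"
    and PM: "prob_space M"
    and ind: "prob_space.indep_vars M (\<lambda>_. borel) Y {1..n}"
    and dist: "\<forall>i\<in>{1..n}. distributed M lborel (Y i) (\<lambda>x. ennreal (f x))"
    and n1: "n \<ge> 1"
begin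

interpretation P: prob_space M by (rule PM)

definition "DD = density lborel (\<lambda>x. ennreal (f x))"

lemma Yi_meas: "i \<in> {1..n} \<Longrightarrow> Y i \<in> borel_measurable M"
  using dist unfolding distributed_def by auto

lemma DD_eq: "i \<in> {1..n} \<Longrightarrow> distr M lborel (Y i) = DD"
  using dist unfolding distributed_def DD_def by auto

lemma DD_rd: "real_distribution DD"
proof -
  have "prob_space (distr M lborel (Y 1))"
    by (rule P.prob_space_distr) (use Yi_meas[of 1] n1 in simp)
  then show ?thesis using DD_eq[of 1] n1
    by (simp add: real_distribution_def real_distribution_axioms_def DD_def)
qed

interpretation D: real_distribution DD by (rule DD_rd)

lemma measure_DD: "A \<in> sets borel \<Longrightarrow> measure DD A = (LINT u:A|lborel. f u)"
proof -
  assume A: "A \<in> sets borel"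
  have "measure DD A = enn2real (\<integral>\<^sup>+ x. ennreal (f x) * indicator A x \<partial>lborel)"
    unfolding DD_def measure_def using A f_meas by (subst emeasure_density) auto
  also have "\<dots> = (LINT u:A|lborel. f u)"
    unfolding set_lebesgue_integral_def using A f_meas f_nonneg
    by (subst integral_eq_nn_integral) (auto intro!: arg_cong[where f=enn2real] nn_integral_cong simp: indicator_def)
  finally show ?thesis .
qed

definition "FF x = measure DD {..x}"

lemma FF_cont: "isCont FF x"
proof -
  have "(LINT u:{x}|lborel. f u) = 0"
    unfolding set_lebesgue_integral_def
    by (rule integral_eq_zero_AE) (use AE_lborel_singleton[of x] in \<open>auto elim!: eventually_mono\<close>)
  then have "measure DD {x} = 0" using measure_DD[of "{x}"] by simp
  then show ?thesis using D.isCont_cdf[of x] unfolding FF_def cdf_def by simp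
qed

lemma FF_mono: "x \<le> y \<Longrightarrow> FF x \<le> FF y"
  using D.cdf_nondecreasing unfolding FF_def cdf_def by simp

lemma FF_bounds: "0 \<le> FF x" "FF x \<le> 1"
  using D.cdf_nonneg D.cdf_bounded_prob unfolding FF_def cdf_def by auto

lemma FF_ivt: assumes "0 < a" "a < 1" shows "\<exists>q. FF q = a"
proof -
  have bot: "(FF \<longlongrightarrow> 0) at_bot" using D.cdf_lim_at_bot unfolding FF_def cdf_def by simp
  have top: "(FF \<longlongrightarrow> 1) at_top" using D.cdf_lim_at_top_prob unfolding FF_def cdf_def by simp
  have "eventually (\<lambda>x. FF x < a) at_bot" using order_tendstoD(2)[OF bot assms(1)] .
  then obtain x0 where x0: "\<And>x. x \<le> x0 \<Longrightarrow> FF x < a" by (auto simp: eventually_at_bot_linorder)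
  have "eventually (\<lambda>x. FF x > a) at_top" using order_tendstoD(1)[OF top assms(2)] .
  then obtain x1 where x1: "\<And>x. x \<ge> x1 \<Longrightarrow> FF x > a" by (auto simp: eventually_at_top_linorder)
  define y1 where "y1 = max x0 x1"
  have "\<exists>x. x0 \<le> x \<and> x \<le> y1 \<and> FF x = a"
    by (rule IVT') (use x0[of x0] x1[of y1] in \<open>auto simp: y1_def intro!: continuous_at_imp_continuous_on FF_cont\<close>)
  then show ?thesis by blast
qed

lemma slice_Iic: "measure DD {..b} = FF b" by (simp add: FF_def)
lemma slice_Ioc: "a \<le> b \<Longrightarrow> measure DD {a<..b} = FF b - FF a"
  using D.cdf_diff_eq[of a b] unfolding FF_def cdf_def by (cases "a = b") auto
lemma slice_Ioi: "measure DD {a<..} = 1 - FF a"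
proof -
  have "{a<..} = UNIV - {..a}" by auto
  then show ?thesis unfolding FF_def using D.prob_compl[of "{..a}"] by simp
qed

lemma prob_le: "i \<in> {1..n} \<Longrightarrow> measure M {w\<in>space M. Y i w \<le> q} = FF q"
proof -
  assume i: "i \<in> {1..n}"
  have "FF q = measure (distr M lborel (Y i)) {..q}" using DD_eq[OF i] by (simp add: FF_def)
  also have "\<dots> = measure M (Y i -` {..q} \<inter> space M)"
    by (rule measure_distr) (use Yi_meas[OF i] in auto)
  finally show ?thesis by (auto intro: arg_cong[where f="measure M"])
qed


lemma hoeff:
  assumes t: "t \<ge> 0"
  shows "measure M {w\<in>space M. (\<Sum>i\<in>{1..n}. if Y i w \<le> q then 1 else 0::real) \<ge> n * FF q + t} \<le> exp (-2 * t\<^sup>2 / n)"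
    and "measure M {w\<in>space M. (\<Sum>i\<in>{1..n}. if Y i w \<le> q then 1 else 0::real) \<le> n * FF q - t} \<le> exp (-2 * t\<^sup>2 / n)"
    and "{w\<in>space M. (\<Sum>i\<in>{1..n}. if Y i w \<le> q then 1 else 0::real) \<ge> n * FF q + t} \<in> sets M"
    and "{w\<in>space M. (\<Sum>i\<in>{1..n}. if Y i w \<le> q then 1 else 0::real) \<le> n * FF q - t} \<in> sets M"
proof -
  define X where "X = (\<lambda>i w. if Y i w \<le> q then 1 else 0::real)"
  have g: "(\<lambda>x::real. if x \<le> q then 1 else 0::real) \<in> borel_measurable borel" by measurable
  have indX: "P.indep_vars (\<lambda>_. borel) X {1..n}"
    unfolding X_def using P.indep_vars_compose2[OF ind, where Y="\<lambda>i x. if x \<le> q then 1 else 0::real" and N="\<lambda>_. borel"] g by simp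
  have Xm: "X i \<in> borel_measurable M" if "i \<in> {1..n}" for i
    unfolding X_def using Yi_meas[OF that] by measurable
  have EX: "P.expectation (X i) = FF q" if i: "i \<in> {1..n}" for i
  proof -
    have "P.expectation (X i) = P.expectation (indicator {w\<in>space M. Y i w \<le> q})"
      by (rule Bochner_Integration.integral_cong) (auto simp: X_def indicator_def)
    also have "\<dots> = measure M {w\<in>space M. Y i w \<le> q}"
      by (simp add: Int_absorb2 Int_commute[of "space M"] Collect_subset)
    finally show ?thesis using prob_le[OF i] by simp
  qed
  have mu: "(\<Sum>i\<in>{1..n}. P.expectation (X i)) = n * FF q" using EX by simp
  interpret H: Hoeffding_ineq M "{1..n}" X "\<lambda>_. 0" "\<lambda>_. 1" "\<Sum>i\<in>{1..n}. P.expectation (X i)"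
    by unfold_locales (use indX in \<open>auto simp: X_def\<close>)
  have pos: "(\<Sum>i\<in>{1..n}. ((1::real) - 0)\<^sup>2) > 0" using n1 by simp
  have sn: "(\<Sum>i\<in>{1..n}. ((1::real) - 0)\<^sup>2) = n" by simp
  show "measure M {w\<in>space M. (\<Sum>i\<in>{1..n}. if Y i w \<le> q then 1 else 0::real) \<ge> n * FF q + t} \<le> exp (-2 * t\<^sup>2 / n)"
    using H.Hoeffding_ineq_ge[OF t pos, unfolded sn mu] unfolding X_def .
  show "measure M {w\<in>space M. (\<Sum>i\<in>{1..n}. if Y i w \<le> q then 1 else 0::real) \<le> n * FF q - t} \<le> exp (-2 * t\<^sup>2 / n)"
    using H.Hoeffding_ineq_le[OF t pos, unfolded sn mu] unfolding X_def .
  have sm: "(\<lambda>w. \<Sum>i\<in>{1..n}. X i w) \<in> borel_measurable M"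
    by (rule borel_measurable_sum) (use Xm in auto)
  show "{w\<in>space M. (\<Sum>i\<in>{1..n}. if Y i w \<le> q then 1 else 0::real) \<ge> n * FF q + t} \<in> sets M"
    using sm unfolding X_def by measurable
  show "{w\<in>space M. (\<Sum>i\<in>{1..n}. if Y i w \<le> q then 1 else 0::real) \<le> n * FF q - t} \<in> sets M"
    using sm unfolding X_def by measurable
qed


lemma exp_eq: "exp (-2 * (real n * t)\<^sup>2 / real n) = exp (-2 * real n * t\<^sup>2)"
  using n1 by (simp add: power2_eq_square)

lemma tail_upper:
  assumes m: "1 \<le> m" "m \<le> n" and t: "t > 0"
  shows "\<exists>S\<in>sets M. {w\<in>space M. FF (order_stat Y n m w) > real m / real n + t} \<subseteq> S
           \<and> measure M S \<le> exp (-2 * real n * t\<^sup>2)"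
proof (cases "real m / real n + t < 1")
  case False
  then have "{w\<in>space M. FF (order_stat Y n m w) > real m / real n + t} \<subseteq> {}"
  proof -
    have "\<not> FF (order_stat Y n m w) > real m / real n + t" for w
      using FF_bounds(2)[of "order_stat Y n m w"] False by linarith
    then show ?thesis by blast
  qed
  then show ?thesis by (intro bexI[of _ "{}"]) auto
next
  case True
  have "0 < real m / real n + t" using m t by (simp add: add_pos_pos)
  then obtain q where q: "FF q = real m / real n + t" using FF_ivt True by blast
  have nq: "real n * FF q - real n * t = real m" using n1 q by (simp add: field_simps)
  define S where "S = {w\<in>space M. (\<Sum>i\<in>{1..n}. if Y i w \<le> q then 1 else 0::real) \<le> n * FF q - n * t}"
  have "S \<in> sets M" unfolding S_def by (rule hoeff(4)) (use t in simp)
  moreover have "measure M S \<le> exp (-2 * real n * t\<^sup>2)"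
    unfolding S_def using hoeff(2)[of "n * t" q] t exp_eq by simp
  moreover have "{w\<in>space M. FF (order_stat Y n m w) > real m / real n + t} \<subseteq> S"
  proof
    fix w assume w: "w \<in> {w\<in>space M. FF (order_stat Y n m w) > real m / real n + t}"
    define L where "L = sort (map (\<lambda>i. Y i w) [1..<n+1])"
    have o: "order_stat Y n m w = L ! (m-1)" by (simp add: order_stat_def L_def)
    have "q < L ! (m-1)"
    proof (rule ccontr)
      assume "\<not> q < L ! (m-1)"
      then have "FF (L!(m-1)) \<le> FF q" using FF_mono by simp
      then show False using w q o by simp
    qed
    then have "(\<Sum>j<length L. if L!j \<le> q then 1 else 0::real) \<le> real m - 1"
      by (intro count_upper) (use m in \<open>auto simp: L_def\<close>)
    moreover have "length L = n" by (simp add: L_def)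
    ultimately have "(\<Sum>i\<in>{1..n}. if Y i w \<le> q then 1 else 0::real) \<le> real m - 1"
      using sum_sort_ind[where g="\<lambda>x. if x \<le> q then 1 else 0::real" and n=n and Y=Y and w=w] by (simp add: L_def)
    then show "w \<in> S" using w nq by (simp add: S_def)
  qed
  ultimately show ?thesis by blast
qed

lemma tail_lower:
  assumes m: "1 \<le> m" "m \<le> n" and t: "t > 0"
  shows "\<exists>S\<in>sets M. {w\<in>space M. FF (order_stat Y n m w) < real m / real n - t} \<subseteq> S
           \<and> measure M S \<le> exp (-2 * real n * t\<^sup>2)"
proof (cases "0 < real m / real n - t")
  case False
  then have "{w\<in>space M. FF (order_stat Y n m w) < real m / real n - t} \<subseteq> {}"
  proof -
    have "\<not> FF (order_stat Y n m w) < real m / real n - t" for w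
      using FF_bounds(1)[of "order_stat Y n m w"] False by linarith
    then show ?thesis by blast
  qed
  then show ?thesis by (intro bexI[of _ "{}"]) auto
next
  case True
  have "real m / real n \<le> 1" using m by simp
  then have "real m / real n - t < 1" using t by simp
  then obtain q where q: "FF q = real m / real n - t" using FF_ivt True by blast
  have nq: "real n * FF q + real n * t = real m" using n1 q by (simp add: field_simps)
  define S where "S = {w\<in>space M. (\<Sum>i\<in>{1..n}. if Y i w \<le> q then 1 else 0::real) \<ge> n * FF q + n * t}"
  have "S \<in> sets M" unfolding S_def by (rule hoeff(3)) (use t in simp)
  moreover have "measure M S \<le> exp (-2 * real n * t\<^sup>2)"
    unfolding S_def using hoeff(1)[of "n * t" q] t exp_eq by simp
  moreover have "{w\<in>space M. FF (order_stat Y n m w) < real m / real n - t} \<subseteq> S"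
  proof
    fix w assume w: "w \<in> {w\<in>space M. FF (order_stat Y n m w) < real m / real n - t}"
    define L where "L = sort (map (\<lambda>i. Y i w) [1..<n+1])"
    have o: "order_stat Y n m w = L ! (m-1)" by (simp add: order_stat_def L_def)
    have "L ! (m-1) \<le> q"
    proof (rule ccontr)
      assume "\<not> L ! (m-1) \<le> q"
      then have "FF q \<le> FF (L!(m-1))" using FF_mono by simp
      then show False using w q o by simp
    qed
    then have "(\<Sum>j<length L. if L!j \<le> q then 1 else 0::real) \<ge> real m"
      by (intro count_lower) (use m in \<open>auto simp: L_def\<close>)
    moreover have "length L = n" by (simp add: L_def)
    ultimately have "(\<Sum>i\<in>{1..n}. if Y i w \<le> q then 1 else 0::real) \<ge> real m"
      using sum_sort_ind[where g="\<lambda>x. if x \<le> q then 1 else 0::real" and n=n and Y=Y and w=w] by (simp add: L_def)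
    then show "w \<in> S" using w nq by (simp add: S_def)
  qed
  ultimately show ?thesis by blast
qed


lemma slice_mass_eq: "slice_mass f Y H c h w = measure DD (slice Y H c h w)"
  unfolding slice_mass_def slice_def by (subst measure_DD) auto

lemma main_bound:
  assumes H: "H \<ge> 2" and c: "c \<ge> 1" and nHc: "n = H * c" and eps: "\<epsilon> > 0"
  shows "measure M (bad_event M f Y H c \<epsilon>) \<le> 2 * real (H - 1) * exp (-2 * real n * (\<epsilon>/2)\<^sup>2)"
proof -
  define t where "t = \<epsilon> / 2"
  have t: "t > 0" using eps by (simp add: t_def)
  define K where "K = {1..H-1}"
  define A where "A k = {w\<in>space M. FF (order_stat Y n (k*c) w) > real (k*c) / real n + t}" for k
  define B where "B k = {w\<in>space M. FF (order_stat Y n (k*c) w) < real (k*c) / real n - t}" for k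
  have kc: "1 \<le> k*c \<and> k*c \<le> n" if "k \<in> K" for k
    using that c H unfolding K_def nHc by (auto intro: mult_le_mono1)
  have "\<forall>k\<in>K. \<exists>S. S \<in> sets M \<and> A k \<subseteq> S \<and> measure M S \<le> exp (-2 * real n * t\<^sup>2)"
    using tail_upper[OF _ _ t] kc unfolding A_def by blast
  then obtain SA where SA: "\<And>k. k \<in> K \<Longrightarrow> SA k \<in> sets M \<and> A k \<subseteq> SA k \<and> measure M (SA k) \<le> exp (-2 * real n * t\<^sup>2)"
    by metis
  have "\<forall>k\<in>K. \<exists>S. S \<in> sets M \<and> B k \<subseteq> S \<and> measure M S \<le> exp (-2 * real n * t\<^sup>2)"
    using tail_lower[OF _ _ t] kc unfolding B_def by blast
  then obtain SB where SB: "\<And>k. k \<in> K \<Longrightarrow> SB k \<in> sets M \<and> B k \<subseteq> SB k \<and> measure M (SB k) \<le> exp (-2 * real n * t\<^sup>2)"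
    by metis
  define U where "U = (\<Union>k\<in>K. SA k \<union> SB k)"
  have U: "U \<in> sets M" unfolding U_def K_def by (intro sets.finite_UN sets.Un) (use SA SB K_def in auto)
  have ratio: "real (k*c) / real n = real k / real H" for k
    using c H unfolding nHc by (simp add: field_simps)
  have sub: "bad_event M f Y H c \<epsilon> \<subseteq> U"
  proof
    fix w assume wb: "w \<in> bad_event M f Y H c \<epsilon>"
    then have wsp: "w \<in> space M" by (simp add: bad_event_def)
    show "w \<in> U"
    proof (rule ccontr)
      assume "w \<notin> U"
      then have good: "\<bar>FF (order_stat Y n (k*c) w) - real k / real H\<bar> \<le> t" if "k \<in> K" for k
        using SA[OF that] SB[OF that] that wsp unfolding U_def A_def B_def ratio by (auto simp: not_less abs_le_iff)
      define L where "L = sort (map (\<lambda>i. Y i w) [1..<n+1])"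
      have os: "order_stat Y n m w = L ! (m - 1)" for m by (simp add: order_stat_def L_def nHc)
      have ok: "\<bar>slice_mass f Y H c h w - 1 / real H\<bar> \<le> \<epsilon>" if h: "h \<in> {1..H}" for h
      proof -
        have sl: "slice_mass f Y H c h w = measure DD (slice Y H c h w)" by (rule slice_mass_eq)
        consider "h = 1" | "h \<noteq> 1" "h = H" | "h \<noteq> 1" "h \<noteq> H" by blast
        then show ?thesis
        proof cases
          case 1
          have "slice Y H c h w = {..order_stat Y (H*c) c w}" using 1 by (simp add: slice_def)
          then have "slice_mass f Y H c h w = FF (order_stat Y n (1*c) w)" using sl slice_Iic nHc by simp
          moreover have "1 \<in> K" using H by (simp add: K_def)
          ultimately show ?thesis using good[of 1] t_def by (auto simp: abs_le_iff)
        next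
          case 2
          have "slice Y H c h w = {order_stat Y (H*c) ((H-1)*c) w<..}" using 2 by (simp add: slice_def)
          then have "slice_mass f Y H c h w = 1 - FF (order_stat Y n ((H-1)*c) w)" using sl slice_Ioi nHc by simp
          moreover have "H - 1 \<in> K" using H by (simp add: K_def)
          moreover have "real (H - 1) / real H = 1 - 1 / real H" using H by (simp add: field_simps of_nat_diff)
          ultimately show ?thesis using good[of "H-1"] t_def by (auto simp: abs_le_iff)
        next
          case 3
          have hK: "h - 1 \<in> K" "h \<in> K" using 3 h by (auto simp: K_def)
          have "slice Y H c h w = {order_stat Y (H*c) ((h-1)*c) w<..order_stat Y (H*c) (h*c) w}"
            using 3 by (simp add: slice_def)
          moreover have le: "order_stat Y n ((h-1)*c) w \<le> order_stat Y n (h*c) w"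
            unfolding os L_def
            by (rule sorted_nth_mono) (use kc[OF hK(2)] n1 in \<open>auto intro: diff_le_mono mult_le_mono1\<close>)
          ultimately have "slice_mass f Y H c h w = FF (order_stat Y n (h*c) w) - FF (order_stat Y n ((h-1)*c) w)"
            using sl slice_Ioc nHc by simp
          moreover have "real (h - 1) / real H = real h / real H - 1 / real H" using 3 h
            by (simp add: field_simps of_nat_diff)
          ultimately show ?thesis using good[OF hK(1)] good[OF hK(2)] t_def unfolding abs_le_iff by linarith
        qed
      qed
      then show False using wb by (force simp: bad_event_def not_less)
    qed
  qed
  have "measure M (bad_event M f Y H c \<epsilon>) \<le> measure M U"
    by (rule P.finite_measure_mono[OF sub U])
  also have "\<dots> \<le> (\<Sum>k\<in>K. measure M (SA k \<union> SB k))"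
    unfolding U_def by (rule P.finite_measure_subadditive_finite) (use SA SB K_def in auto)
  also have "\<dots> \<le> (\<Sum>k\<in>K. 2 * exp (-2 * real n * t\<^sup>2))"
  proof (rule sum_mono)
    fix k assume k: "k \<in> K"
    have "measure M (SA k \<union> SB k) \<le> measure M (SA k) + measure M (SB k)"
      by (rule measure_Un_le) (use SA[OF k] SB[OF k] in auto)
    then show "measure M (SA k \<union> SB k) \<le> 2 * exp (-2 * real n * t\<^sup>2)" using SA[OF k] SB[OF k] by linarith
  qed
  also have "\<dots> = 2 * real (H - 1) * exp (-2 * real n * (\<epsilon>/2)\<^sup>2)" by (simp add: K_def t_def)
  finally show ?thesis .
qed

end


theorem lemma11:
  fixes f :: "real \<Rightarrow> real"
  assumes f_nonneg: "\<And>x. 0 \<le> f x"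
    and f_meas: "f \<in> borel_measurable borel"
  shows "\<exists>C>0. \<exists>H0 c0. \<forall>H c. H \<ge> H0 \<longrightarrow> c \<ge> c0 \<longrightarrow>
    (\<forall>\<epsilon>::real. \<epsilon> > 4 / (real (H * c) - 1) \<longrightarrow>
      (\<forall>(M :: 'a measure) (Y :: nat \<Rightarrow> 'a \<Rightarrow> real).
         prob_space M \<longrightarrow>
         prob_space.indep_vars M (\<lambda>_. borel) Y {1..H * c} \<longrightarrow>
         (\<forall>i\<in>{1..H * c}. distributed M lborel (Y i) (\<lambda>x. ennreal (f x))) \<longrightarrow>
         measure M (bad_event M f Y H c \<epsilon>)
           \<le> C * (real H)^2 * sqrt (real (H * c) + 1)
               * exp (- (real (H * c) + 1) * \<epsilon>^2 / 32)))"
proof (intro exI[of _ "2::real"] conjI exI[of _ "2::nat"] allI impI)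
  show "(0::real) < 2" by simp
  fix H c :: nat and \<epsilon> :: real and M :: "'a measure" and Y :: "nat \<Rightarrow> 'a \<Rightarrow> real"
  assume H: "2 \<le> H" and c2: "2 \<le> c" and eps: "4 / (real (H * c) - 1) < \<epsilon>"
    and PM: "prob_space M" and ind: "prob_space.indep_vars M (\<lambda>_. borel) Y {1..H * c}"
    and dist: "\<forall>i\<in>{1..H * c}. distributed M lborel (Y i) (\<lambda>x. ennreal (f x))"
  have c: "1 \<le> c" using c2 by simp
  define n where "n = H * c"
  have n2: "n \<ge> 2" using H c unfolding n_def by (metis mult_le_mono nat_mult_1_right)
  have "real n - 1 > 0" using n2 by simp
  then have e0: "\<epsilon> > 0" using eps unfolding n_def[symmetric] by (smt (verit) divide_pos_pos)
  have mb: "measure M (bad_event M f Y H c \<epsilon>) \<le> 2 * real (H - 1) * exp (-2 * real n * (\<epsilon>/2)\<^sup>2)"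
  proof -
    have n1: "1 \<le> n" using n2 by simp
    show ?thesis
      using main_bound[OF f_nonneg f_meas PM ind[folded n_def] dist[folded n_def] n1 H c n_def e0] .
  qed
  have a: "real (H - 1) \<le> (real H)^2 * sqrt (real n + 1)"
  proof -
    have "real (H - 1) \<le> (real H)^2" 
    proof -
      have "real (H - 1) \<le> real H" by simp
      also have "\<dots> \<le> real H * real H" using H by simp
      finally show ?thesis by (simp add: power2_eq_square)
    qed
    also have "\<dots> \<le> (real H)^2 * sqrt (real n + 1)" by (rule mult_le_cancel_left1[THEN iffD2]) (use H in auto)
    finally show ?thesis .
  qed
  have b: "exp (-2 * real n * (\<epsilon>/2)\<^sup>2) \<le> exp (- (real n + 1) * \<epsilon>^2 / 32)"
  proof -
    have "(real n + 1) * \<epsilon>^2 / 32 \<le> 2 * real n * (\<epsilon>/2)\<^sup>2"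
    proof -
      have "(real n + 1) \<le> 16 * real n" using n2 by simp
      then have "(real n + 1) * \<epsilon>^2 \<le> 16 * real n * \<epsilon>^2" by (rule mult_right_mono) simp
      then show ?thesis by (simp add: power2_eq_square field_simps)
    qed
    moreover have "- (real n + 1) * \<epsilon>^2 / 32 = - ((real n + 1) * \<epsilon>^2 / 32)" by (simp add: algebra_simps)
    moreover have "-2 * real n * (\<epsilon>/2)\<^sup>2 = - (2 * real n * (\<epsilon>/2)\<^sup>2)" by simp
    ultimately have "-2 * real n * (\<epsilon>/2)\<^sup>2 \<le> - (real n + 1) * \<epsilon>^2 / 32" by linarith
    then show ?thesis by simp
  qed
  have "2 * real (H - 1) * exp (-2 * real n * (\<epsilon>/2)\<^sup>2) \<le> 2 * ((real H)^2 * sqrt (real n + 1)) * exp (- (real n + 1) * \<epsilon>^2 / 32)"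
    by (intro mult_mono a b) auto
  with mb show "measure M (bad_event M f Y H c \<epsilon>) \<le> 2 * (real H)^2 * sqrt (real (H * c) + 1) * exp (- (real (H * c) + 1) * \<epsilon>^2 / 32)"
    by (simp add: n_def mult.assoc)


qed

end
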